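(* (1) Let $(D,\dashv,\vdash)$ be a pre-dialgebra of type I. Then setting $a\prec b=a\dashv b$ and $a\succ b=a\vdash b-a\dashv b$ makes $(D,\prec,\succ)$ a dendriform algebra. (2) Let $(D,\dashv,\vdash)$ be a pre-dialgebra of type III. Then setting $a\succ b=a\vdash b$ and $a\prec b=a\dashv b-a\vdash b$ makes $(D,\prec,\succ)$ a dendriform algebra. (3) Conversely, any dendriform algebra $(E,\prec,\succ)$ with $\prec$ associative is a pre-dialgebra of type I with $a\dashv b=a\prec b$, $a\vdash b=a\prec b+a\succ b$; and any dendriform algebra with $\succ$ associative is a pre-dialgebra of type III with $a\vdash b=a\succ b$, $a\dashv b=a\prec b+a\succ b$.
   Context: All spaces are $k$-vector spaces and operations bilinear. A dialgebra is a vector space with two associative operations $\dashv,\vdash$ satisfying (1) $x\dashv(y\dashv z)=x\dashv(y\vdash z)$, (2) $(x\vdash y)\dashv z=x\vdash(y\dashv z)$, (3) $(x\dashv y)\vdash z=(x\vdash y)\vdash z$. A pre-dialgebra of type I (resp. type III) is a vector space with two associative operations $\dashv,\vdash$ satisfying axioms (1) and (2) (resp. (2) and (3)). A dendriform algebra is a vector space $E$ with two operations $\prec,\succ$ satisfying $(a\prec b)\prec c=a\prec(b\prec c)+a\prec(b\succ c)$, $(a\succ b)\prec c=a\succ(b\prec c)$, and $(a\prec b)\succ c+(a\succ b)\succ c=a\succ(b\succ c)$ for all $a,b,c$. *)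

theory Defs
  imports Main "HOL.Vector_Spaces"
begin

definition bilinear_op :: "('k::field \<Rightarrow> 'v::ab_group_add \<Rightarrow> 'v) \<Rightarrow> ('v \<Rightarrow> 'v \<Rightarrow> 'v) \<Rightarrow> bool" where
  "bilinear_op sc m \<longleftrightarrow> (\<forall>a. Vector_Spaces.linear sc sc (m a)) \<and> (\<forall>b. Vector_Spaces.linear sc sc (\<lambda>a. m a b))"

definition assoc_op :: "('v \<Rightarrow> 'v \<Rightarrow> 'v) \<Rightarrow> bool" where
  "assoc_op m \<longleftrightarrow> (\<forall>x y z. m (m x y) z = m x (m y z))"

text \<open>Pre-dialgebra of type I: two associative bilinear operations (left = dashv, right = vdash)
  satisfying axioms (1) and (2).\<close>
definition pre_dialgebra_I :: "('k::field \<Rightarrow> 'v::ab_group_add \<Rightarrow> 'v) \<Rightarrow> ('v \<Rightarrow> 'v \<Rightarrow> 'v) \<Rightarrow> ('v \<Rightarrow> 'v \<Rightarrow> 'v) \<Rightarrow> bool" where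
  "pre_dialgebra_I sc dl dr \<longleftrightarrow> vector_space sc \<and> bilinear_op sc dl \<and> bilinear_op sc dr
     \<and> assoc_op dl \<and> assoc_op dr
     \<and> (\<forall>x y z. dl x (dl y z) = dl x (dr y z))
     \<and> (\<forall>x y z. dl (dr x y) z = dr x (dl y z))"

text \<open>Pre-dialgebra of type III: axioms (2) and (3).\<close>
definition pre_dialgebra_III :: "('k::field \<Rightarrow> 'v::ab_group_add \<Rightarrow> 'v) \<Rightarrow> ('v \<Rightarrow> 'v \<Rightarrow> 'v) \<Rightarrow> ('v \<Rightarrow> 'v \<Rightarrow> 'v) \<Rightarrow> bool" where
  "pre_dialgebra_III sc dl dr \<longleftrightarrow> vector_space sc \<and> bilinear_op sc dl \<and> bilinear_op sc dr
     \<and> assoc_op dl \<and> assoc_op dr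
     \<and> (\<forall>x y z. dl (dr x y) z = dr x (dl y z))
     \<and> (\<forall>x y z. dr (dl x y) z = dr (dr x y) z)"

text \<open>Dendriform algebra (prec = pl, succ = sr).\<close>
definition dendriform :: "('k::field \<Rightarrow> 'v::ab_group_add \<Rightarrow> 'v) \<Rightarrow> ('v \<Rightarrow> 'v \<Rightarrow> 'v) \<Rightarrow> ('v \<Rightarrow> 'v \<Rightarrow> 'v) \<Rightarrow> bool" where
  "dendriform sc pl sr \<longleftrightarrow> vector_space sc \<and> bilinear_op sc pl \<and> bilinear_op sc sr
     \<and> (\<forall>a b c. pl (pl a b) c = pl a (pl b c) + pl a (sr b c))
     \<and> (\<forall>a b c. pl (sr a b) c = sr a (pl b c))
     \<and> (\<forall>a b c. sr (pl a b) c + sr (sr a b) c = sr a (sr b c))"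

end

theory Submission
  imports Defs
begin

lemma bil_lin:
  assumes "bilinear_op sc m"
  shows "Vector_Spaces.linear sc sc (m a)" "Vector_Spaces.linear sc sc (\<lambda>a. m a b)"
  using assms unfolding bilinear_op_def by auto

lemma bil_vs: "bilinear_op sc m \<Longrightarrow> vector_space sc"
  using bil_lin(1) Vector_Spaces.linear_iff by blast

lemma bil_eqs:
  assumes "bilinear_op sc m"
  shows "m (x+y) z = m x z + m y z" "m x (y+z) = m x y + m x z"
    "m (x-y) z = m x z - m y z" "m x (y-z) = m x y - m x z"
proof -
  have l1: "module_hom sc sc (m x)" using bil_lin(1)[OF assms] module_hom_iff_linear by blast
  have l2: "module_hom sc sc (\<lambda>a. m a z)" using bil_lin(2)[OF assms] module_hom_iff_linear by blast
  show "m (x+y) z = m x z + m y z" using module_hom.add[OF l2] by simp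
  show "m x (y+z) = m x y + m x z" using module_hom.add[OF l1] by simp
  show "m (x-y) z = m x z - m y z" using module_hom.diff[OF l2] by simp
  show "m x (y-z) = m x y - m x z" using module_hom.diff[OF l1] by simp
qed

lemma bil_add:
  assumes f: "bilinear_op sc f" and g: "bilinear_op sc g"
  shows "bilinear_op sc (\<lambda>a b. f a b + g a b)" "bilinear_op sc (\<lambda>a b. f a b - g a b)"
proof -
  have vp: "vector_space_pair sc sc" using bil_vs[OF f]
    by (simp add: vector_space_pair_def)
  show "bilinear_op sc (\<lambda>a b. f a b + g a b)"
    unfolding bilinear_op_def
    using vector_space_pair.linear_compose_add[OF vp bil_lin(1)[OF f] bil_lin(1)[OF g]]
      vector_space_pair.linear_compose_add[OF vp bil_lin(2)[OF f] bil_lin(2)[OF g]]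
    by blast
  show "bilinear_op sc (\<lambda>a b. f a b - g a b)"
    unfolding bilinear_op_def
    using vector_space_pair.linear_compose_sub[OF vp bil_lin(1)[OF f] bil_lin(1)[OF g]]
      vector_space_pair.linear_compose_sub[OF vp bil_lin(2)[OF f] bil_lin(2)[OF g]]
    by blast
qed

lemma p1:
  assumes b1: "bilinear_op sc dl" and b2: "bilinear_op sc dr"
    and a1: "assoc_op dl" and a2: "assoc_op dr"
    and x1: "\<And>x y z. dl x (dl y z) = dl x (dr y z)"
    and x2: "\<And>x y z. dl (dr x y) z = dr x (dl y z)"
  shows "dl (dl a b) c = dl a (dl b c) + dl a (dr b c - dl b c)"
    "dl (dr a b - dl a b) c = dr a (dl b c) - dl a (dl b c)"
    "(dr (dl a b) c - dl (dl a b) c) + (dr (dr a b - dl a b) c - dl (dr a b - dl a b) c) = dr a (dr b c - dl b c) - dl a (dr b c - dl b c)"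
  using a1 a2 unfolding assoc_op_def
  by (simp_all add: bil_eqs[OF b1] bil_eqs[OF b2] x1 x2)

lemma p2:
  assumes b1: "bilinear_op sc dl" and b2: "bilinear_op sc dr"
    and a1: "assoc_op dl" and a2: "assoc_op dr"
    and x1: "\<And>x y z. dl (dr x y) z = dr x (dl y z)"
    and x2: "\<And>x y z. dr (dl x y) z = dr (dr x y) z"
  shows "dl (dl a b - dr a b) c - dr (dl a b - dr a b) c = (dl a (dl b c - dr b c) - dr a (dl b c - dr b c)) + (dl a (dr b c) - dr a (dr b c))"
    "dl (dr a b) c - dr (dr a b) c = dr a (dl b c - dr b c)"
    "dr (dl a b - dr a b) c + dr (dr a b) c = dr a (dr b c)"
  using a1 a2 unfolding assoc_op_def
  by (simp_all add: bil_eqs[OF b1] bil_eqs[OF b2] x1 x2)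

lemma p3:
  assumes b1: "bilinear_op sc pl" and b2: "bilinear_op sc sr"
    and a1: "assoc_op pl"
    and x1: "\<And>a b c. pl (pl a b) c = pl a (pl b c) + pl a (sr b c)"
    and x2: "\<And>a b c. pl (sr a b) c = sr a (pl b c)"
    and x3: "\<And>a b c. sr (pl a b) c + sr (sr a b) c = sr a (sr b c)"
  shows "pl (pl a b + sr a b) c + sr (pl a b + sr a b) c = pl a (pl b c + sr b c) + sr a (pl b c + sr b c)"
    "pl a (pl b c) = pl a (pl b c + sr b c)"
    "pl (pl a b + sr a b) c = pl a (pl b c) + sr a (pl b c)"
proof -
  have z: "pl a (sr b c) = 0" using x1[of a b c] a1 unfolding assoc_op_def by simp
  show "pl a (pl b c) = pl a (pl b c + sr b c)" using z by (simp add: bil_eqs[OF b1])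
  show "pl (pl a b + sr a b) c = pl a (pl b c) + sr a (pl b c)"
    using a1 unfolding assoc_op_def by (simp add: bil_eqs[OF b1] x2)
  have "pl (pl a b + sr a b) c + sr (pl a b + sr a b) c
      = pl (pl a b) c + pl (sr a b) c + (sr (pl a b) c + sr (sr a b) c)"
    by (simp add: bil_eqs[OF b1] bil_eqs[OF b2] algebra_simps)
  also have "\<dots> = pl a (pl b c) + pl a (sr b c) + sr a (pl b c) + sr a (sr b c)"
    by (simp only: x1 x2 x3)
  also have "\<dots> = pl a (pl b c + sr b c) + sr a (pl b c + sr b c)"
    by (simp add: bil_eqs[OF b1] bil_eqs[OF b2] algebra_simps)
  finally show "pl (pl a b + sr a b) c + sr (pl a b + sr a b) c = pl a (pl b c + sr b c) + sr a (pl b c + sr b c)" .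
qed

lemma p4:
  assumes b1: "bilinear_op sc pl" and b2: "bilinear_op sc sr"
    and a1: "assoc_op sr"
    and x1: "\<And>a b c. pl (pl a b) c = pl a (pl b c) + pl a (sr b c)"
    and x2: "\<And>a b c. pl (sr a b) c = sr a (pl b c)"
    and x3: "\<And>a b c. sr (pl a b) c + sr (sr a b) c = sr a (sr b c)"
  shows "pl (pl a b + sr a b) c + sr (pl a b + sr a b) c = pl a (pl b c + sr b c) + sr a (pl b c + sr b c)"
    "pl (sr a b) c + sr (sr a b) c = sr a (pl b c + sr b c)"
    "sr (pl a b + sr a b) c = sr (sr a b) c"
proof -
  have z: "sr (pl a b) c = 0" using x3[of a b c] a1 unfolding assoc_op_def by simp
  show "sr (pl a b + sr a b) c = sr (sr a b) c" using z by (simp add: bil_eqs[OF b2])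
  show "pl (sr a b) c + sr (sr a b) c = sr a (pl b c + sr b c)"
    using a1 unfolding assoc_op_def by (simp add: bil_eqs[OF b2] x2)
  have "pl (pl a b + sr a b) c + sr (pl a b + sr a b) c
      = pl (pl a b) c + pl (sr a b) c + (sr (pl a b) c + sr (sr a b) c)"
    by (simp add: bil_eqs[OF b1] bil_eqs[OF b2] algebra_simps)
  also have "\<dots> = pl a (pl b c) + pl a (sr b c) + sr a (pl b c) + sr a (sr b c)"
    by (simp only: x1 x2 x3)
  also have "\<dots> = pl a (pl b c + sr b c) + sr a (pl b c + sr b c)"
    by (simp add: bil_eqs[OF b1] bil_eqs[OF b2] algebra_simps)
  finally show "pl (pl a b + sr a b) c + sr (pl a b + sr a b) c = pl a (pl b c + sr b c) + sr a (pl b c + sr b c)" .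
qed

theorem mainTheorem10:
  fixes sc :: "'k::field \<Rightarrow> 'v::ab_group_add \<Rightarrow> 'v"
  shows "(\<forall>dl dr. pre_dialgebra_I sc dl dr \<longrightarrow>
            dendriform sc (\<lambda>a b. dl a b) (\<lambda>a b. dr a b - dl a b))
    \<and> (\<forall>dl dr. pre_dialgebra_III sc dl dr \<longrightarrow>
            dendriform sc (\<lambda>a b. dl a b - dr a b) (\<lambda>a b. dr a b))
    \<and> (\<forall>pl sr. dendriform sc pl sr \<and> assoc_op pl \<longrightarrow>
            pre_dialgebra_I sc (\<lambda>a b. pl a b) (\<lambda>a b. pl a b + sr a b))
    \<and> (\<forall>pl sr. dendriform sc pl sr \<and> assoc_op sr \<longrightarrow>
            pre_dialgebra_III sc (\<lambda>a b. pl a b + sr a b) (\<lambda>a b. sr a b))"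
proof (intro conjI allI impI)
  fix dl dr assume h: "pre_dialgebra_I sc dl dr"
  then have b1: "bilinear_op sc dl" and b2: "bilinear_op sc dr"
    and a1: "assoc_op dl" and a2: "assoc_op dr"
    and x1: "\<And>x y z. dl x (dl y z) = dl x (dr y z)"
    and x2: "\<And>x y z. dl (dr x y) z = dr x (dl y z)" and vs: "vector_space sc"
    unfolding pre_dialgebra_I_def by auto
  show "dendriform sc (\<lambda>a b. dl a b) (\<lambda>a b. dr a b - dl a b)"
    unfolding dendriform_def
    using vs b1 bil_add(2)[OF b2 b1] p1[OF b1 b2 a1 a2 x1 x2] by blast
next
  fix dl dr assume h: "pre_dialgebra_III sc dl dr"
  then have b1: "bilinear_op sc dl" and b2: "bilinear_op sc dr"
    and a1: "assoc_op dl" and a2: "assoc_op dr"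
    and x1: "\<And>x y z. dl (dr x y) z = dr x (dl y z)"
    and x2: "\<And>x y z. dr (dl x y) z = dr (dr x y) z" and vs: "vector_space sc"
    unfolding pre_dialgebra_III_def by auto
  show "dendriform sc (\<lambda>a b. dl a b - dr a b) (\<lambda>a b. dr a b)"
    unfolding dendriform_def
    using vs b2 bil_add(2)[OF b1 b2] p2[OF b1 b2 a1 a2 x1 x2] by blast
next
  fix pl sr assume h: "dendriform sc pl sr \<and> assoc_op pl"
  then have b1: "bilinear_op sc pl" and b2: "bilinear_op sc sr"
    and a1: "assoc_op pl" and vs: "vector_space sc"
    and x1: "\<And>a b c. pl (pl a b) c = pl a (pl b c) + pl a (sr b c)"
    and x2: "\<And>a b c. pl (sr a b) c = sr a (pl b c)"
    and x3: "\<And>a b c. sr (pl a b) c + sr (sr a b) c = sr a (sr b c)"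
    unfolding dendriform_def by auto
  show "pre_dialgebra_I sc (\<lambda>a b. pl a b) (\<lambda>a b. pl a b + sr a b)"
    unfolding pre_dialgebra_I_def assoc_op_def
    using vs b1 bil_add(1)[OF b1 b2] a1[unfolded assoc_op_def] p3[OF b1 b2 a1 x1 x2 x3] by blast
next
  fix pl sr assume h: "dendriform sc pl sr \<and> assoc_op sr"
  then have b1: "bilinear_op sc pl" and b2: "bilinear_op sc sr"
    and a1: "assoc_op sr" and vs: "vector_space sc"
    and x1: "\<And>a b c. pl (pl a b) c = pl a (pl b c) + pl a (sr b c)"
    and x2: "\<And>a b c. pl (sr a b) c = sr a (pl b c)"
    and x3: "\<And>a b c. sr (pl a b) c + sr (sr a b) c = sr a (sr b c)"
    unfolding dendriform_def by auto
  show "pre_dialgebra_III sc (\<lambda>a b. pl a b + sr a b) (\<lambda>a b. sr a b)"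
    unfolding pre_dialgebra_III_def assoc_op_def
    using vs b2 bil_add(1)[OF b1 b2] a1[unfolded assoc_op_def] p4[OF b1 b2 a1 x1 x2 x3] by blast
qed

end
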